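(* Let $H<G$ and $H'<G'$ be countable abelian groups such that all elements of $G/H$ and of $G'/H'$ have odd order, and suppose $r:H\to H'$ is an isomorphism. Let $\|\cdot\|_H$ be a proper norm on $H$ and $\|\cdot\|_{H'}=\|r^{-1}(\cdot)\|_H$ the induced norm on $H'$. Suppose there are one-step ascending chains $\mathcal L=\{G_0<G_1<\cdots\}$ and $\mathcal L'=\{G'_0<G'_1<\cdots\}$ associated to $H$ and $H'$ respectively with equal sequences of indexes. Let $d_G$ and $d_{G'}$ be the pseudo-ultrametrics generated by $(\|\cdot\|_H,\mathcal L)$ and $(\|\cdot\|_{H'},\mathcal L')$ (with any admissible sequences $\{K_n\}$, $\{K'_n\}$). Then $(G,d_G)$ and $(G',d_{G'})$ are coarsely equivalent, and the coarse equivalence can be chosen to be bijective.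
   Context: Proper norm: $\|g\|=0$ iff $g=0$, $\|-g\|=\|g\|$, subadditive, finite balls. One-step ascending chain of a countable locally finite group $Q$: $\{0\}=Q_0<Q_1<\cdots$, $\bigcup Q_i=Q$, with $q_i$ such that $Q_i=\langle q_1,\dots,q_i\rangle$ and $q_{i+1}\notin Q_i$; the chain associated to $H$ is $G_i=\pi^{-1}(Q_i)$ ($\pi:G\to G/H$), with generators $g_i\in\pi^{-1}(q_i)$ and indexes $m_i=[G_i:G_{i-1}]=2k_i+1$. Every $g\in G$ has a unique representation $g=h_g+\sum r_ig_i$ with $h_g\in H$, $r_i\in[-k_i,k_i]\cap\mathbb Z$, almost all zero. Given positive $K_n$ strictly increasing to $\infty$ with $K_n\ge\sum_{i=1}^n(n-i+1)\|h_{m_ig_i}\|_H$ (admissible), the pseudo-ultrametric generated is $d_G(x,y)=\|y-x\|_G$ where $\|g\|_G=\|h_g\|_H+\|\pi(\sum r_ig_i)\|_{G/H}$ and $\|x\|_{G/H}=K_i$ for $x\in Q_i\setminus Q_{i-1}$, $\|0\|_{G/H}=0$. A coarse equivalence is a map $f$ such that for each $\delta$ there is $\epsilon$ with $d(x,y)\le\delta\Rightarrow d(f x,f y)\le\epsilon$, with a map $g$ of the same kind such that $fg$, $gf$ are at bounded distance from the identities. *)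

theory Defs
  imports Complex_Main "HOL-Library.Countable"
begin

definition is_subgroup :: "'g::ab_group_add set \<Rightarrow> bool" where
  "is_subgroup A \<longleftrightarrow> 0 \<in> A \<and> (\<forall>x\<in>A. \<forall>y\<in>A. x + y \<in> A) \<and> (\<forall>x\<in>A. - x \<in> A)"

definition gen_subgroup :: "'g::ab_group_add set \<Rightarrow> 'g set" where
  "gen_subgroup S = \<Inter>{A. is_subgroup A \<and> S \<subseteq> A}"

fun nmul :: "nat \<Rightarrow> 'g::ab_group_add \<Rightarrow> 'g" where
  "nmul 0 g = 0"
| "nmul (Suc n) g = g + nmul n g"

definition zmul :: "int \<Rightarrow> 'g::ab_group_add \<Rightarrow> 'g" where
  "zmul k g = (if k \<ge> 0 then nmul (nat k) g else - nmul (nat (- k)) g)"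

definition coset_order :: "'g::ab_group_add set \<Rightarrow> 'g \<Rightarrow> nat" where
  "coset_order H g = (if \<exists>n>0. nmul n g \<in> H then (LEAST n. n > 0 \<and> nmul n g \<in> H) else 0)"

definition quotient_odd_orders :: "'g::ab_group_add set \<Rightarrow> bool" where
  "quotient_odd_orders H \<longleftrightarrow> (\<forall>g. coset_order H g > 0 \<and> odd (coset_order H g))"

definition group_iso_on :: "('g::ab_group_add \<Rightarrow> 'h::ab_group_add) \<Rightarrow> 'g set \<Rightarrow> 'h set \<Rightarrow> bool" where
  "group_iso_on r H H' \<longleftrightarrow> bij_betw r H H' \<and> (\<forall>x\<in>H. \<forall>y\<in>H. r (x + y) = r x + r y)"

text \<open>Proper norm on the subgroup H (only values on H matter).\<close>
definition proper_norm_on :: "'g::ab_group_add set \<Rightarrow> ('g \<Rightarrow> real) \<Rightarrow> bool" where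
  "proper_norm_on H n \<longleftrightarrow>
     (\<forall>g\<in>H. n g = 0 \<longleftrightarrow> g = 0) \<and>
     (\<forall>g\<in>H. n (- g) = n g) \<and>
     (\<forall>g\<in>H. \<forall>h\<in>H. n (g + h) \<le> n g + n h) \<and>
     (\<forall>R. finite {g\<in>H. n g \<le> R})"

text \<open>G_i = preimage of Q_i = <q_1,...,q_i> under G -> G/H, i.e. the subgroup generated
  by H and g_1,...,g_i (generators g_i indexed from 1).\<close>
definition chainG :: "'g::ab_group_add set \<Rightarrow> (nat \<Rightarrow> 'g) \<Rightarrow> nat \<Rightarrow> 'g set" where
  "chainG H gen i = gen_subgroup (H \<union> gen ` {1..i})"

definition one_step_chain :: "'g::ab_group_add set \<Rightarrow> (nat \<Rightarrow> 'g) \<Rightarrow> bool" where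
  "one_step_chain H gen \<longleftrightarrow>
     is_subgroup H \<and>
     (\<forall>i. gen (Suc i) \<notin> chainG H gen i) \<and>
     (\<Union>i. chainG H gen i) = UNIV"

text \<open>Index m_i = [G_i : G_{i-1}] and k_i with m_i = 2 k_i + 1.\<close>
definition chain_index :: "'g::ab_group_add set \<Rightarrow> (nat \<Rightarrow> 'g) \<Rightarrow> nat \<Rightarrow> nat" where
  "chain_index H gen i =
     card ((\<lambda>x. (\<lambda>y. x + y) ` chainG H gen (i - 1)) ` chainG H gen i)"

definition chain_k :: "'g::ab_group_add set \<Rightarrow> (nat \<Rightarrow> 'g) \<Rightarrow> nat \<Rightarrow> int" where
  "chain_k H gen i = (int (chain_index H gen i) - 1) div 2"

definition rep_ok :: "'g::ab_group_add set \<Rightarrow> (nat \<Rightarrow> 'g) \<Rightarrow> 'g \<Rightarrow> 'g \<Rightarrow> (nat \<Rightarrow> int) \<Rightarrow> bool" where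
  "rep_ok H gen g h r \<longleftrightarrow>
     h \<in> H \<and> finite {i. r i \<noteq> 0} \<and> r 0 = 0 \<and>
     (\<forall>i\<ge>1. \<bar>r i\<bar> \<le> chain_k H gen i) \<and>
     g = h + (\<Sum>i\<in>{i. r i \<noteq> 0}. zmul (r i) (gen i))"

definition hpart :: "'g::ab_group_add set \<Rightarrow> (nat \<Rightarrow> 'g) \<Rightarrow> 'g \<Rightarrow> 'g" where
  "hpart H gen g = (THE h. \<exists>r. rep_ok H gen g h r)"

definition rpart :: "'g::ab_group_add set \<Rightarrow> (nat \<Rightarrow> 'g) \<Rightarrow> 'g \<Rightarrow> nat \<Rightarrow> int" where
  "rpart H gen g = (THE r. \<exists>h. rep_ok H gen g h r)"

definition admissible :: "'g::ab_group_add set \<Rightarrow> (nat \<Rightarrow> 'g) \<Rightarrow> ('g \<Rightarrow> real) \<Rightarrow> (nat \<Rightarrow> real) \<Rightarrow> bool" where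
  "admissible H gen nH K \<longleftrightarrow>
     (\<forall>n\<ge>1. K n > 0) \<and>
     (\<forall>n\<ge>1. K n < K (Suc n)) \<and>
     filterlim K at_top sequentially \<and>
     (\<forall>n\<ge>1. K n \<ge> (\<Sum>i=1..n. real (n - i + 1) *
                nH (hpart H gen (nmul (chain_index H gen i) (gen i)))))"

text \<open>Norm on G/H pulled back to G: ||pi x|| = K_i if pi x in Q_i - Q_{i-1}, 0 if pi x = 0.\<close>
definition qnorm :: "'g::ab_group_add set \<Rightarrow> (nat \<Rightarrow> 'g) \<Rightarrow> (nat \<Rightarrow> real) \<Rightarrow> 'g \<Rightarrow> real" where
  "qnorm H gen K x = (if x \<in> H then 0 else K (LEAST i. x \<in> chainG H gen i))"

definition normG :: "'g::ab_group_add set \<Rightarrow> (nat \<Rightarrow> 'g) \<Rightarrow> ('g \<Rightarrow> real) \<Rightarrow> (nat \<Rightarrow> real) \<Rightarrow> 'g \<Rightarrow> real" where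
  "normG H gen nH K g =
     nH (hpart H gen g) +
     qnorm H gen K (\<Sum>i\<in>{i. rpart H gen g i \<noteq> 0}. zmul (rpart H gen g i) (gen i))"

definition distG :: "'g::ab_group_add set \<Rightarrow> (nat \<Rightarrow> 'g) \<Rightarrow> ('g \<Rightarrow> real) \<Rightarrow> (nat \<Rightarrow> real) \<Rightarrow> 'g \<Rightarrow> 'g \<Rightarrow> real" where
  "distG H gen nH K x y = normG H gen nH K (y - x)"

definition coarse_map :: "('a \<Rightarrow> 'a \<Rightarrow> real) \<Rightarrow> ('b \<Rightarrow> 'b \<Rightarrow> real) \<Rightarrow> ('a \<Rightarrow> 'b) \<Rightarrow> bool" where
  "coarse_map d d' f \<longleftrightarrow> (\<forall>\<delta>. \<exists>\<epsilon>. \<forall>x y. d x y \<le> \<delta> \<longrightarrow> d' (f x) (f y) \<le> \<epsilon>)"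

definition coarse_equivalence :: "('a \<Rightarrow> 'a \<Rightarrow> real) \<Rightarrow> ('b \<Rightarrow> 'b \<Rightarrow> real) \<Rightarrow> ('a \<Rightarrow> 'b) \<Rightarrow> bool" where
  "coarse_equivalence d d' f \<longleftrightarrow> coarse_map d d' f \<and>
     (\<exists>g. coarse_map d' d g \<and> (\<exists>C. \<forall>x. d (g (f x)) x \<le> C) \<and> (\<exists>C. \<forall>y. d' (f (g y)) y \<le> C))"

end

theory Submission
  imports Defs
begin


lemma nmul_add: "nmul (m+n) g = nmul m g + nmul n g"
  by (induct m) (simp_all add: add.assoc)
lemma nmul_plus: "nmul n (x+y) = nmul n x + nmul n y"
  by (induct n) (simp_all add: algebra_simps)
lemma nmul_zero[simp]: "nmul n 0 = 0"
  by (induct n) simp_all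
lemma nmul_minus: "nmul n (-x) = - nmul n x"
  by (induct n) (simp_all add: algebra_simps)
lemma nmul_mult: "nmul (m*n) g = nmul m (nmul n g)"
  by (induct m) (simp_all add: nmul_add)
lemma zmul_nat[simp]: "zmul (int n) g = nmul n g"
  by (simp add: zmul_def)
lemma zmul_diff_nat: "zmul (int p - int q) g = nmul p g - nmul q g"
proof (cases "q \<le> p")
  case True
  then obtain d where "p = q + d" using le_Suc_ex by blast
  then show ?thesis by (simp add: nmul_add)
next
  case False
  then obtain d where d: "q = p + d" "d > 0" by (metis add_diff_inverse_nat less_imp_le_nat not_le zero_less_diff)
  have "int p - int q = - int d" using d by simp
  then show ?thesis using d by (simp add: zmul_def nmul_add)
qed
lemma int_split: "(a::int) = int (nat a) - int (nat (-a))" by simp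
lemma zmul_add: "zmul (a+b) g = zmul a g + zmul b g"
proof -
  have "a + b = int (nat a + nat b) - int (nat (-a) + nat (-b))" by simp
  then have "zmul (a+b) g = nmul (nat a + nat b) g - nmul (nat (-a) + nat (-b)) g"
    by (metis zmul_diff_nat)
  moreover have "zmul a g = nmul (nat a) g - nmul (nat (-a)) g" by (metis int_split zmul_diff_nat)
  moreover have "zmul b g = nmul (nat b) g - nmul (nat (-b)) g" by (metis int_split zmul_diff_nat)
  moreover have "nmul (nat a + nat b) g - nmul (nat (-a) + nat (-b)) g
     = (nmul (nat a) g - nmul (nat (-a)) g) + (nmul (nat b) g - nmul (nat (-b)) g)"
    by (simp add: nmul_add algebra_simps)
  ultimately show ?thesis by simp
qed
lemma zmul_0[simp]: "zmul 0 g = 0" by (simp add: zmul_def)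
lemma zmul_1[simp]: "zmul 1 g = g" by (simp add: zmul_def)
lemma zmul_uminus: "zmul (-a) g = - zmul a g"
  using zmul_add[of a "-a" g] by (simp add: eq_neg_iff_add_eq_0 add.commute)
lemma zmul_diff: "zmul (a-b) g = zmul a g - zmul b g"
  using zmul_add[of a "-b" g] by (simp add: zmul_uminus)
lemma zmul_plus: "zmul a (x+y) = zmul a x + zmul a y"
  by (simp add: zmul_def nmul_plus)
lemma zmul_neg: "zmul a (-x) = - zmul a x"
  by (simp add: zmul_def nmul_minus)
lemma zmul_minus: "zmul a (x-y) = zmul a x - zmul a y"
  by (metis diff_conv_add_uminus zmul_neg zmul_plus)
lemma zmul_zero[simp]: "zmul a 0 = 0" by (simp add: zmul_def)
lemma zmul_nat_mult: "zmul (int p * b) g = zmul (int p) (zmul b g)"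
proof (induct p)
  case 0 then show ?case by simp
next
  case (Suc p)
  have "zmul (int (Suc p) * b) g = zmul b g + zmul (int p * b) g"
    by (simp add: algebra_simps zmul_add[symmetric])
  moreover have "zmul (int (Suc p)) (zmul b g) = zmul b g + nmul p (zmul b g)"
    by (simp only: zmul_nat) simp
  ultimately show ?case using Suc by simp
qed
lemma zmul_mult: "zmul (a*b) g = zmul a (zmul b g)"
proof (cases "a \<ge> 0")
  case True
  then show ?thesis using zmul_nat_mult[of "nat a" b g] by simp
next
  case False
  then have "a = - int (nat (-a))" by simp
  then show ?thesis using zmul_nat_mult[of "nat (-a)" b g]
    by (metis minus_mult_left zmul_uminus)
qed

lemma sg_0: "is_subgroup A \<Longrightarrow> 0 \<in> A" by (simp add: is_subgroup_def)
lemma sg_add: "is_subgroup A \<Longrightarrow> x \<in> A \<Longrightarrow> y \<in> A \<Longrightarrow> x + y \<in> A" by (simp add: is_subgroup_def)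
lemma sg_neg: "is_subgroup A \<Longrightarrow> x \<in> A \<Longrightarrow> - x \<in> A" by (simp add: is_subgroup_def)
lemma sg_diff: "is_subgroup A \<Longrightarrow> x \<in> A \<Longrightarrow> y \<in> A \<Longrightarrow> x - y \<in> A"
  by (metis diff_conv_add_uminus sg_add sg_neg)
lemma sg_nmul: "is_subgroup A \<Longrightarrow> x \<in> A \<Longrightarrow> nmul n x \<in> A"
  by (induct n) (simp_all add: sg_0 sg_add)
lemma sg_zmul: "is_subgroup A \<Longrightarrow> x \<in> A \<Longrightarrow> zmul k x \<in> A"
  by (simp add: zmul_def sg_nmul sg_neg)
lemma sg_sum: "is_subgroup A \<Longrightarrow> (\<And>i. i \<in> S \<Longrightarrow> f i \<in> A) \<Longrightarrow> sum f S \<in> A"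
  by (induct S rule: infinite_finite_induct) (simp_all add: sg_0 sg_add)

lemma gen_subgroup_sg: "is_subgroup (gen_subgroup S)"
  unfolding gen_subgroup_def is_subgroup_def by auto
lemma gen_subgroup_sup: "S \<subseteq> gen_subgroup S"
  unfolding gen_subgroup_def by auto
lemma gen_subgroup_least: "is_subgroup A \<Longrightarrow> S \<subseteq> A \<Longrightarrow> gen_subgroup S \<subseteq> A"
  unfolding gen_subgroup_def by auto



lemma coset_eq: "is_subgroup A \<Longrightarrow> x - y \<in> A \<Longrightarrow> (+) x ` A = (+) y ` A"
proof (intro equalityI subsetI)
  fix z assume sA: "is_subgroup A" and d: "x - y \<in> A"
  { assume "z \<in> (+) x ` A"
    then obtain a where a: "a \<in> A" "z = x + a" by auto
    then have "z = y + ((x - y) + a)" by simp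
    moreover have "(x - y) + a \<in> A" using sA d a sg_add by blast
    ultimately show "z \<in> (+) y ` A" by blast }
  { assume "z \<in> (+) y ` A"
    then obtain a where a: "a \<in> A" "z = y + a" by auto
    then have "z = x + (-(x - y) + a)" by simp
    moreover have "-(x - y) + a \<in> A" using sA d a sg_add sg_neg by blast
    ultimately show "z \<in> (+) x ` A" by blast }
qed

lemma coset_eq_D: "is_subgroup A \<Longrightarrow> (+) x ` A = (+) y ` A \<Longrightarrow> x - y \<in> A"
proof -
  assume sA: "is_subgroup A" and e: "(+) x ` A = (+) y ` A"
  have "x \<in> (+) x ` A" using sg_0[OF sA] by (metis add.right_neutral image_eqI)
  then obtain a where "a \<in> A" "x = y + a" using e by auto
  then show ?thesis by simp
qed

locale chs =
  fixes H :: "'g::ab_group_add set" and gen :: "nat \<Rightarrow> 'g"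
  assumes sgH: "is_subgroup H" and oddH: "quotient_odd_orders H" and osc: "one_step_chain H gen"
begin

abbreviation G where "G i \<equiv> chainG H gen i"

lemma G_sg: "is_subgroup (G i)"
  by (simp add: chainG_def gen_subgroup_sg)
lemma H_G: "H \<subseteq> G i"
  using gen_subgroup_sup unfolding chainG_def by blast
lemma G0: "G 0 = H"
  using gen_subgroup_least[OF sgH, of H] H_G[of 0] by (auto simp: chainG_def)
lemma gen_G: "1 \<le> i \<Longrightarrow> i \<le> j \<Longrightarrow> gen i \<in> G j"
  using gen_subgroup_sup unfolding chainG_def by fastforce
lemma G_mono: "i \<le> j \<Longrightarrow> G i \<subseteq> G j"
  unfolding chainG_def
  by (rule gen_subgroup_least[OF gen_subgroup_sg]) (use gen_subgroup_sup in fastforce)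
lemma gen_notin: "gen (Suc i) \<notin> G i"
  using osc by (simp add: one_step_chain_def)
lemma G_level: "\<exists>i. x \<in> G i"
  using osc by (auto simp: one_step_chain_def)

lemma G_Suc: "x \<in> G (Suc i) \<Longrightarrow> \<exists>a\<in>G i. \<exists>t. x = a + zmul t (gen (Suc i))"
proof -
  let ?g = "gen (Suc i)"
  define S where "S = {a + zmul t ?g | a t. a \<in> G i}"
  have "is_subgroup S" unfolding is_subgroup_def
  proof (intro conjI ballI)
    show "0 \<in> S" unfolding S_def by (rule CollectI, rule exI[of _ 0], rule exI[of _ 0]) (simp add: sg_0[OF G_sg])
    fix x y assume "x \<in> S" "y \<in> S"
    then obtain a t b s where "a \<in> G i" "b \<in> G i" "x = a + zmul t ?g" "y = b + zmul s ?g"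
      unfolding S_def by auto
    then show "x + y \<in> S" unfolding S_def
      by (intro CollectI exI[of _ "a+b"] exI[of _ "t+s"]) (auto simp: zmul_add sg_add[OF G_sg] algebra_simps)
  next
    fix x assume "x \<in> S"
    then obtain a t where "a \<in> G i" "x = a + zmul t ?g" unfolding S_def by auto
    then show "- x \<in> S" unfolding S_def
      by (intro CollectI exI[of _ "-a"] exI[of _ "-t"]) (auto simp: zmul_uminus sg_neg[OF G_sg])
  qed
  moreover have "H \<union> gen ` {1..Suc i} \<subseteq> S"
  proof
    fix x assume x: "x \<in> H \<union> gen ` {1..Suc i}"
    show "x \<in> S"
    proof (cases "x = ?g")
      case True show ?thesis unfolding S_def True by (rule CollectI, rule exI[of _ 0], rule exI[of _ 1]) (simp add: sg_0[OF G_sg])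
    next
      case False
      then have "x \<in> G i" using x H_G gen_G by (auto simp: le_Suc_eq)
      show ?thesis unfolding S_def
        by (rule CollectI) (rule exI[of _ x], rule exI[of _ 0], simp add: \<open>x \<in> G i\<close>)
    qed
  qed
  ultimately have "G (Suc i) \<subseteq> S" unfolding chainG_def by (rule gen_subgroup_least)
  moreover assume "x \<in> G (Suc i)"
  ultimately have "x \<in> S" by blast
  then show ?thesis unfolding S_def by blast
qed

definition ordS :: "nat \<Rightarrow> nat" where
  "ordS p = (LEAST n. n > 0 \<and> nmul n (gen (Suc p)) \<in> G p)"

lemma co_props: "coset_order H g > 0" "nmul (coset_order H g) g \<in> H"
proof -
  show "coset_order H g > 0" using oddH by (simp add: quotient_odd_orders_def)
  then have ex: "\<exists>n>0. nmul n g \<in> H" by (metis coset_order_def less_irrefl)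
  then have "coset_order H g = (LEAST n. n > 0 \<and> nmul n g \<in> H)" by (simp add: coset_order_def)
  then show "nmul (coset_order H g) g \<in> H" using LeastI_ex[of "\<lambda>n. n > 0 \<and> nmul n g \<in> H"] ex by auto
qed

lemma ordS_props: "ordS p > 0" "nmul (ordS p) (gen (Suc p)) \<in> G p"
  "\<And>n. 0 < n \<Longrightarrow> n < ordS p \<Longrightarrow> nmul n (gen (Suc p)) \<notin> G p"
proof -
  let ?P = "\<lambda>n. n > 0 \<and> nmul n (gen (Suc p)) \<in> G p"
  have "?P (coset_order H (gen (Suc p)))" using co_props H_G by blast
  then have "?P (ordS p)" unfolding ordS_def by (rule LeastI)
  then show "ordS p > 0" "nmul (ordS p) (gen (Suc p)) \<in> G p" by auto
  fix n assume "0 < n" "n < ordS p"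
  then show "nmul n (gen (Suc p)) \<notin> G p" unfolding ordS_def using not_less_Least by blast
qed

lemma zmul_in_iff: "zmul t (gen (Suc p)) \<in> G p \<longleftrightarrow> int (ordS p) dvd t"
proof
  let ?g = "gen (Suc p)" and ?m = "int (ordS p)"
  assume "?m dvd t"
  then obtain q where "t = ?m * q" by blast
  then have "zmul t ?g = zmul q (nmul (ordS p) ?g)"
    by (metis zmul_mult zmul_nat mult.commute)
  then show "zmul t ?g \<in> G p" using sg_zmul[OF G_sg ordS_props(2)] by simp
next
  let ?g = "gen (Suc p)" and ?m = "int (ordS p)"
  assume a: "zmul t ?g \<in> G p"
  have mpos: "?m > 0" using ordS_props(1) by simp
  define s where "s = t mod ?m"
  have s: "0 \<le> s" "s < ?m" using mpos by (auto simp: s_def)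
  have "t = s + ?m * (t div ?m)" by (simp add: s_def)
  then have "zmul s ?g = zmul t ?g - zmul (?m * (t div ?m)) ?g"
    by (metis add_diff_cancel_right' zmul_add)
  moreover have "zmul (?m * (t div ?m)) ?g \<in> G p"
    using sg_zmul[OF G_sg ordS_props(2)[of p], of "t div ?m"] zmul_mult[of "t div ?m" ?m ?g]
    by (simp add: mult.commute)
  ultimately have "zmul s ?g \<in> G p" using a sg_diff[OF G_sg] by simp
  then have "nmul (nat s) ?g \<in> G p" using s by (metis int_nat_eq zmul_nat)
  then have "nat s = 0"
  proof (rule contrapos_pp)
    assume "nat s \<noteq> 0"
    then have "0 < nat s" "nat s < ordS p" using s by auto
    then show "nmul (nat s) ?g \<notin> G p" by (rule ordS_props(3))
  qed
  then have "s = 0" using s by simp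
  then show "?m dvd t" by (simp add: s_def dvd_eq_mod_eq_0)
qed

lemma ordS_gt1: "ordS p > 1"
proof (rule ccontr)
  assume "\<not> ordS p > 1"
  then have "ordS p = 1" using ordS_props(1)[of p] by linarith
  then have "nmul 1 (gen (Suc p)) \<in> G p" using ordS_props(2) by metis
  then show False using gen_notin by simp
qed

lemma ordS_odd: "odd (ordS p)"
proof -
  let ?g = "gen (Suc p)"
  have "zmul (int (coset_order H ?g)) ?g \<in> G p" using co_props H_G by auto
  then have "int (ordS p) dvd int (coset_order H ?g)" using zmul_in_iff by blast
  then have "ordS p dvd coset_order H ?g" by simp
  moreover have "odd (coset_order H ?g)" using oddH by (simp add: quotient_odd_orders_def)
  ultimately show ?thesis using dvd_trans by blast
qed

lemma chain_index_eq: "chain_index H gen (Suc p) = ordS p"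
proof -
  let ?g = "gen (Suc p)" and ?A = "G p" and ?m = "ordS p"
  have sA: "is_subgroup ?A" by (rule G_sg)
  have X: "(\<lambda>x. (+) x ` ?A) ` G (Suc p) = (\<lambda>j. (+) (nmul j ?g) ` ?A) ` {0..<?m}"
  proof (intro equalityI subsetI)
    fix X assume "X \<in> (\<lambda>x. (+) x ` ?A) ` G (Suc p)"
    then obtain x where x: "x \<in> G (Suc p)" "X = (+) x ` ?A" by auto
    then obtain a t where at: "a \<in> ?A" "x = a + zmul t ?g" using G_Suc by blast
    define j where "j = nat (t mod int ?m)"
    have mpos: "int ?m > 0" using ordS_props(1) by simp
    have "t mod int ?m < int ?m" "0 \<le> t mod int ?m" using mpos by auto
    then have j: "j < ?m" "int j = t mod int ?m" by (auto simp: j_def nat_less_iff)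
    have nj: "nmul j ?g = zmul (t mod int ?m) ?g" using j(2) by (metis zmul_nat)
    have "x - nmul j ?g = a + zmul (t - t mod int ?m) ?g"
      unfolding nj at(2) zmul_diff by simp
    moreover have "zmul (t - t mod int ?m) ?g \<in> ?A"
      by (simp add: zmul_in_iff del: zmul_nat)
    ultimately have "x - nmul j ?g \<in> ?A" using at(1) sg_add[OF sA] by metis
    then have "X = (+) (nmul j ?g) ` ?A" using coset_eq[OF sA] x by simp
    then show "X \<in> (\<lambda>j. (+) (nmul j ?g) ` ?A) ` {0..<?m}" using j by auto
  next
    fix X assume "X \<in> (\<lambda>j. (+) (nmul j ?g) ` ?A) ` {0..<?m}"
    then obtain j where "X = (+) (nmul j ?g) ` ?A" by auto
    moreover have "nmul j ?g \<in> G (Suc p)" using sg_nmul[OF G_sg gen_G] by simp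
    ultimately show "X \<in> (\<lambda>x. (+) x ` ?A) ` G (Suc p)" by blast
  qed
  have "inj_on (\<lambda>j. (+) (nmul j ?g) ` ?A) {0..<?m}"
  proof (rule inj_onI)
    fix i j assume ij: "i \<in> {0..<?m}" "j \<in> {0..<?m}" and e: "(+) (nmul i ?g) ` ?A = (+) (nmul j ?g) ` ?A"
    have "nmul i ?g - nmul j ?g \<in> ?A" using coset_eq_D[OF sA e] .
    then have "zmul (int i - int j) ?g \<in> ?A" by (simp add: zmul_diff_nat)
    then have d: "int ?m dvd (int i - int j)" using zmul_in_iff by blast
    show "i = j"
    proof (rule ccontr)
      assume "i \<noteq> j"
      then have "\<bar>int ?m\<bar> \<le> \<bar>int i - int j\<bar>" using dvd_imp_le_int[OF _ d] by simp
      then show False using ij by auto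
    qed
  qed
  then show ?thesis unfolding chain_index_def using X by (simp add: card_image)
qed

lemma chain_k_eq0: "2 * chain_k H gen (Suc p) + 1 = int (ordS p)"
proof -
  obtain q where "ordS p = 2 * q + 1" using ordS_odd oddE by blast
  then show ?thesis unfolding chain_k_def chain_index_eq by simp
qed

lemma chain_k_eq: "2 * chain_k H gen (Suc p) + 1 = int (ordS p)" by (rule chain_k_eq0)
lemma chain_k_nonneg: "1 \<le> i \<Longrightarrow> 0 \<le> chain_k H gen i"
  using chain_k_eq[of "i - 1"] ordS_props(1)[of "i - 1"] by simp

end


lemma sum_supp: "(\<forall>i. (r::nat\<Rightarrow>int) i \<noteq> 0 \<longrightarrow> i \<in> {1..P}) \<Longrightarrow>
  (\<Sum>i\<in>{i. r i \<noteq> 0}. zmul (r i) (g i)) = (\<Sum>i\<in>{1..P}. zmul (r i) (g i))"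
  by (rule sum.mono_neutral_left) auto

lemma supp_bound: "finite {i. (r::nat\<Rightarrow>int) i \<noteq> 0} \<Longrightarrow> r 0 = 0 \<Longrightarrow> \<exists>P. \<forall>i. r i \<noteq> 0 \<longrightarrow> i \<in> {1..P}"
proof -
  assume f: "finite {i. (r::nat\<Rightarrow>int) i \<noteq> 0}" and z: "r 0 = 0"
  obtain P where "\<forall>i\<in>{i. r i \<noteq> 0}. i \<le> P" using f finite_nat_set_iff_bounded_le by blast
  then show ?thesis using z by (intro exI[of _ P]) (auto simp: Suc_le_eq intro: Nat.gr0I)
qed

context chs begin

lemma exists_rep: "x \<in> G n \<Longrightarrow> \<exists>h r. h \<in> H \<and> (\<forall>i. r i \<noteq> 0 \<longrightarrow> i \<in> {1..n}) \<and>
   (\<forall>i\<ge>1. \<bar>r i\<bar> \<le> chain_k H gen i) \<and> x = h + (\<Sum>i\<in>{1..n}. zmul (r i) (gen i))"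
proof (induct n arbitrary: x)
  case 0
  then show ?case using G0 chain_k_nonneg by (intro exI[of _ x] exI[of _ "\<lambda>_. 0"]) auto
next
  case (Suc n)
  let ?g = "gen (Suc n)" and ?m = "int (ordS n)" and ?k = "chain_k H gen (Suc n)"
  obtain a t where at: "a \<in> G n" "x = a + zmul t ?g" using G_Suc Suc.prems by blast
  have mk: "2 * ?k + 1 = ?m" by (rule chain_k_eq)
  define s where "s = t mod ?m"
  have s12: "0 \<le> s" "s < ?m" using ordS_props(1)[of n] by (simp_all add: s_def)
  have s: "0 \<le> s" "s < ?m" "?m dvd t - s" using s12 by (auto simp: s_def mod_eq_dvd_iff[symmetric])
  define \<rho> where "\<rho> = (if s \<le> ?k then s else s - ?m)"
  have rho: "\<bar>\<rho>\<bar> \<le> ?k" "?m dvd t - \<rho>"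
  proof -
    show "\<bar>\<rho>\<bar> \<le> ?k" using s(1,2) mk by (simp add: \<rho>_def)
    show "?m dvd t - \<rho>"
    proof (cases "s \<le> ?k")
      case True then show ?thesis using s(3) by (simp add: \<rho>_def)
    next
      case False
      have "t - (s - ?m) = (t - s) + ?m" by simp
      moreover have "?m dvd (t - s) + ?m" using s(3) by (rule dvd_add) simp
      moreover have "\<rho> = s - ?m" using False by (simp add: \<rho>_def)
      ultimately show ?thesis by metis
    qed
  qed
  define a' where "a' = a + zmul (t - \<rho>) ?g"
  have a': "a' \<in> G n" unfolding a'_def using at rho zmul_in_iff sg_add[OF G_sg] by blast
  have xa: "x = a' + zmul \<rho> ?g" unfolding a'_def at(2) zmul_diff by simp
  obtain h r where hr: "h \<in> H" "\<forall>i. r i \<noteq> 0 \<longrightarrow> i \<in> {1..n}" "\<forall>i\<ge>1. \<bar>r i\<bar> \<le> chain_k H gen i"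
    "a' = h + (\<Sum>i\<in>{1..n}. zmul (r i) (gen i))" using Suc.hyps[OF a'] by blast
  define r' where "r' = r(Suc n := \<rho>)"
  have "(\<Sum>i\<in>{1..Suc n}. zmul (r' i) (gen i)) = (\<Sum>i\<in>{1..n}. zmul (r' i) (gen i)) + zmul \<rho> ?g"
    by (simp add: r'_def)
  also have "(\<Sum>i\<in>{1..n}. zmul (r' i) (gen i)) = (\<Sum>i\<in>{1..n}. zmul (r i) (gen i))"
    by (rule sum.cong) (auto simp: r'_def)
  finally have e: "x = h + (\<Sum>i\<in>{1..Suc n}. zmul (r' i) (gen i))" using xa hr(4) by (simp add: add.assoc)
  show ?case
    by (rule exI[of _ h], rule exI[of _ r']) (use hr rho e in \<open>auto simp: r'_def\<close>)
qed

lemma uniq_core: "a \<in> G M \<Longrightarrow> h \<in> H \<Longrightarrow> (\<forall>i\<in>{1..P}. \<bar>d i\<bar> \<le> 2 * chain_k H gen i) \<Longrightarrow>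
   a = h + (\<Sum>i\<in>{1..P}. zmul (d i) (gen i)) \<Longrightarrow> M < i \<Longrightarrow> i \<le> P \<Longrightarrow> d i = 0"
proof (induct P arbitrary: i)
  case 0 then show ?case by simp
next
  case (Suc P)
  show ?case
  proof (cases "Suc P \<le> M")
    case True then show ?thesis using Suc.prems by simp
  next
    case False
    let ?g = "gen (Suc P)" and ?m = "int (ordS P)" and ?k = "chain_k H gen (Suc P)"
    have sumP: "(\<Sum>i\<in>{1..Suc P}. zmul (d i) (gen i)) = (\<Sum>i\<in>{1..P}. zmul (d i) (gen i)) + zmul (d (Suc P)) ?g"
      by simp
    have "zmul (d (Suc P)) ?g = a - h - (\<Sum>i\<in>{1..P}. zmul (d i) (gen i))"
      using Suc.prems(4) sumP by (simp add: algebra_simps)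
    moreover have "a \<in> G P" using Suc.prems(1) G_mono[of M P] False by auto
    moreover have "h \<in> G P" using Suc.prems(2) H_G by auto
    moreover have "(\<Sum>i\<in>{1..P}. zmul (d i) (gen i)) \<in> G P"
      by (rule sg_sum[OF G_sg]) (rule sg_zmul[OF G_sg gen_G], auto)
    ultimately have "zmul (d (Suc P)) ?g \<in> G P" using sg_diff[OF G_sg] by presburger
    then have dv: "?m dvd d (Suc P)" using zmul_in_iff by blast
    have bd: "\<bar>d (Suc P)\<bar> \<le> 2 * ?k" using Suc.prems(3) by simp
    have d0: "d (Suc P) = 0"
    proof (rule ccontr)
      assume "d (Suc P) \<noteq> 0"
      then have "\<bar>?m\<bar> \<le> \<bar>d (Suc P)\<bar>" using dvd_imp_le_int dv by blast
      then show False using bd chain_k_eq[of P] by simp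
    qed
    show ?thesis
    proof (cases "i = Suc P")
      case True then show ?thesis using d0 by simp
    next
      case False
      have "a = h + (\<Sum>i\<in>{1..P}. zmul (d i) (gen i))" using Suc.prems(4) sumP d0 by simp
      then show ?thesis using Suc.hyps[of i] Suc.prems False by simp
    qed
  qed
qed

lemma rep_unique: "rep_ok H gen x h r \<Longrightarrow> rep_ok H gen x h' r' \<Longrightarrow> h = h' \<and> r = r'"
proof -
  assume A: "rep_ok H gen x h r" and B: "rep_ok H gen x h' r'"
  obtain P1 where P1: "\<forall>i. r i \<noteq> 0 \<longrightarrow> i \<in> {1..P1}" using A supp_bound unfolding rep_ok_def by blast
  obtain P2 where P2: "\<forall>i. r' i \<noteq> 0 \<longrightarrow> i \<in> {1..P2}" using B supp_bound unfolding rep_ok_def by blast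
  define P where "P = max P1 P2"
  have s1: "\<forall>i. r i \<noteq> 0 \<longrightarrow> i \<in> {1..P}" using P1 by (auto simp: P_def)
  have s2: "\<forall>i. r' i \<noteq> 0 \<longrightarrow> i \<in> {1..P}" using P2 by (auto simp: P_def)
  have x1: "x = h + (\<Sum>i\<in>{1..P}. zmul (r i) (gen i))" using A sum_supp[OF s1] unfolding rep_ok_def by simp
  have x2: "x = h' + (\<Sum>i\<in>{1..P}. zmul (r' i) (gen i))" using B sum_supp[OF s2] unfolding rep_ok_def by simp
  define S where "S = (\<Sum>i\<in>{1..P}. zmul (r i) (gen i))"
  define S' where "S' = (\<Sum>i\<in>{1..P}. zmul (r' i) (gen i))"
  have "0 = (h + S) - (h' + S')" unfolding S_def S'_def by (metis x1 x2 diff_self)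
  also have "\<dots> = (h - h') + (S - S')" by (simp add: algebra_simps)
  also have "S - S' = (\<Sum>i\<in>{1..P}. zmul (r i - r' i) (gen i))"
    unfolding S_def S'_def by (simp add: zmul_diff sum_subtractf)
  finally have z: "0 = (h - h') + (\<Sum>i\<in>{1..P}. zmul (r i - r' i) (gen i))" .
  have hH: "h - h' \<in> H" using A B sg_diff[OF sgH] unfolding rep_ok_def by blast
  have bd: "\<forall>i\<in>{1..P}. \<bar>r i - r' i\<bar> \<le> 2 * chain_k H gen i" using A B unfolding rep_ok_def by force
  have "\<And>i. 0 < i \<Longrightarrow> i \<le> P \<Longrightarrow> r i - r' i = 0"
    by (rule uniq_core[where M=0, OF _ hH bd z]) (simp_all add: G0 sg_0[OF sgH])
  then have rr: "r = r'"
  proof (intro ext)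
    fix i assume D: "\<And>i. 0 < i \<Longrightarrow> i \<le> P \<Longrightarrow> r i - r' i = 0"
    show "r i = r' i"
    proof (cases "0 < i \<and> i \<le> P")
      case True then show ?thesis using D by simp
    next
      case False
      have r0: "r i = 0"
      proof (rule ccontr)
        assume "r i \<noteq> 0" then have "i \<in> {1..P}" using s1 by blast
        then show False using False by auto
      qed
      have r0': "r' i = 0"
      proof (rule ccontr)
        assume "r' i \<noteq> 0" then have "i \<in> {1..P}" using s2 by blast
        then show False using False by auto
      qed
      show ?thesis using r0 r0' by simp
    qed
  qed
  then show ?thesis using x1 x2 by simp
qed

lemma rep_exists: "\<exists>h r. rep_ok H gen x h r"
proof -
  obtain n where "x \<in> G n" using G_level by blast
  then obtain h r where hr: "h \<in> H" "\<forall>i. r i \<noteq> 0 \<longrightarrow> i \<in> {1..n}" "\<forall>i\<ge>1. \<bar>r i\<bar> \<le> chain_k H gen i"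
    "x = h + (\<Sum>i\<in>{1..n}. zmul (r i) (gen i))" using exists_rep by blast
  have "{i. r i \<noteq> 0} \<subseteq> {1..n}" using hr(2) by blast
  then have "finite {i. r i \<noteq> 0}" using finite_subset by blast
  moreover have "r 0 = 0" using hr(2) by force
  moreover have "x = h + (\<Sum>i\<in>{i. r i \<noteq> 0}. zmul (r i) (gen i))" by (simp add: hr(4) sum_supp[OF hr(2)])
  ultimately have "rep_ok H gen x h r" using hr(1,3) unfolding rep_ok_def by blast
  then show ?thesis by blast
qed

lemma rep_parts: "rep_ok H gen x (hpart H gen x) (rpart H gen x)"
proof -
  obtain h r where hr: "rep_ok H gen x h r" using rep_exists by blast
  have "hpart H gen x = h" unfolding hpart_def
    by (rule the_equality) (use hr rep_unique in blast)+
  moreover have "rpart H gen x = r" unfolding rpart_def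
    by (rule the_equality) (use hr rep_unique in blast)+
  ultimately show ?thesis using hr by simp
qed

lemma rep_iff: "rep_ok H gen x h r \<longleftrightarrow> h = hpart H gen x \<and> r = rpart H gen x"
  using rep_parts rep_unique by blast

end


lemma finite_pairs: "finite {((\<Sum>i\<in>{1..N}. zmul (d i) (u i)), (\<Sum>i\<in>{1..N}. zmul (d i) (v i))) | d.
     \<forall>i\<in>{1..N}. \<bar>d i\<bar> \<le> (b::nat\<Rightarrow>int) i}"
  (is "finite (?S N)")
proof (induct N)
  case 0 then show ?case by (rule finite_subset[of _ "{(0,0)}"]) auto
next
  case (Suc N)
  have "?S (Suc N) \<subseteq> (\<lambda>((c,c'),j). (c + zmul j (u (Suc N)), c' + zmul j (v (Suc N)))) ` (?S N \<times> {-b (Suc N)..b (Suc N)})"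
  proof
    fix p assume "p \<in> ?S (Suc N)"
    then obtain d where d: "\<forall>i\<in>{1..Suc N}. \<bar>d i\<bar> \<le> b i"
      "p = ((\<Sum>i\<in>{1..Suc N}. zmul (d i) (u i)), (\<Sum>i\<in>{1..Suc N}. zmul (d i) (v i)))" by blast
    have "((\<Sum>i\<in>{1..N}. zmul (d i) (u i)), (\<Sum>i\<in>{1..N}. zmul (d i) (v i))) \<in> ?S N"
      using d(1) by force
    moreover have "d (Suc N) \<in> {-b (Suc N)..b (Suc N)}" using d(1) by force
    moreover have "p = (\<lambda>((c,c'),j). (c + zmul j (u (Suc N)), c' + zmul j (v (Suc N))))
        (((\<Sum>i\<in>{1..N}. zmul (d i) (u i)), (\<Sum>i\<in>{1..N}. zmul (d i) (v i))), d (Suc N))"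
      using d(2) by simp
    ultimately show "p \<in> (\<lambda>((c,c'),j). (c + zmul j (u (Suc N)), c' + zmul j (v (Suc N)))) ` (?S N \<times> {-b (Suc N)..b (Suc N)})"
      by blast
  qed
  then show ?case using Suc by (meson finite_SigmaI finite_atLeastAtMost_int finite_imageI finite_subset)
qed

context chs begin

lemma hpart_in: "hpart H gen x \<in> H" using rep_parts unfolding rep_ok_def by blast

lemma decomp: "x = hpart H gen x + (\<Sum>i\<in>{i. rpart H gen x i \<noteq> 0}. zmul (rpart H gen x i) (gen i))"
  using rep_parts unfolding rep_ok_def by blast

lemma hpart_add: "a \<in> H \<Longrightarrow> hpart H gen (a + c) = a + hpart H gen c"
proof -
  assume a: "a \<in> H"
  have "rep_ok H gen (a + c) (a + hpart H gen c) (rpart H gen c)"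
    using rep_parts[of c] a sg_add[OF sgH] unfolding rep_ok_def by (auto simp: add.assoc)
  then show ?thesis unfolding rep_iff by simp
qed

lemma normG_eq: "normG H gen nH K x = nH (hpart H gen x) + qnorm H gen K (x - hpart H gen x)"
  unfolding normG_def using decomp[of x] by (metis add_diff_cancel_left')

lemma least_level: "x \<notin> H \<Longrightarrow> x \<in> G (LEAST i. x \<in> G i) \<and> (LEAST i. x \<in> G i) \<ge> 1"
proof -
  assume x: "x \<notin> H"
  obtain n where n: "x \<in> G n" using G_level by blast
  have "x \<in> G (LEAST i. x \<in> G i)" using LeastI[of "\<lambda>i. x \<in> G i", OF n] .
  moreover have "(LEAST i. x \<in> G i) \<noteq> 0" using calculation x G0 by (metis)
  ultimately show ?thesis by simp
qed

lemma qnorm_nonneg: "\<forall>n\<ge>1. K n > 0 \<Longrightarrow> qnorm H gen K w \<ge> 0"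
  unfolding qnorm_def using least_level[of w] by (auto intro: less_imp_le)

lemma qnorm_small: "(\<forall>n\<ge>1. K n \<le> \<delta> \<longrightarrow> n \<le> N) \<Longrightarrow> qnorm H gen K w \<le> \<delta> \<Longrightarrow> w \<in> G N"
proof (cases "w \<in> H")
  case True then show ?thesis using H_G by blast
next
  case False
  assume a: "\<forall>n\<ge>1. K n \<le> \<delta> \<longrightarrow> n \<le> N" "qnorm H gen K w \<le> \<delta>"
  let ?L = "LEAST i. w \<in> G i"
  have "K ?L \<le> \<delta>" using a(2) False by (simp add: qnorm_def)
  then have "?L \<le> N" using a(1) least_level[OF False] by blast
  then show ?thesis using least_level[OF False] G_mono by blast
qed

lemma qnorm_bound: "w \<in> G N \<Longrightarrow> qnorm H gen K w \<le> (\<Sum>n\<le>N. \<bar>K n\<bar>)"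
proof (cases "w \<in> H")
  case True then show ?thesis by (simp add: qnorm_def sum_nonneg)
next
  case False
  assume w: "w \<in> G N"
  let ?L = "LEAST i. w \<in> G i"
  have "?L \<le> N" using w by (rule Least_le)
  then have "\<bar>K ?L\<bar> \<le> (\<Sum>n\<le>N. \<bar>K n\<bar>)" by (intro member_le_sum) auto
  then show ?thesis using False by (simp add: qnorm_def)
qed

lemma sum_gen_G: "(\<Sum>i\<in>{1..N}. zmul (d i) (gen i)) \<in> G N"
  by (rule sg_sum[OF G_sg]) (rule sg_zmul[OF G_sg gen_G], auto)

lemma rpart_props: "finite {i. rpart H gen x i \<noteq> 0}" "rpart H gen x 0 = 0"
  "\<forall>i\<ge>1. \<bar>rpart H gen x i\<bar> \<le> chain_k H gen i"
  using rep_parts[of x] unfolding rep_ok_def by auto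

end


definition transp :: "('g::ab_group_add \<Rightarrow> 'h::ab_group_add) \<Rightarrow> 'g set \<Rightarrow> (nat \<Rightarrow> 'g) \<Rightarrow> (nat \<Rightarrow> 'h) \<Rightarrow> 'g \<Rightarrow> 'h" where
  "transp r H gen gen' x = r (hpart H gen x) + (\<Sum>i\<in>{i. rpart H gen x i \<noteq> 0}. zmul (rpart H gen x i) (gen' i))"

locale pair = A: chs H gen + B: chs H' gen'
  for H :: "'g::ab_group_add set" and gen and H' :: "'h::ab_group_add set" and gen' +
  fixes r :: "'g \<Rightarrow> 'h" and nH :: "'g \<Rightarrow> real" and nH' :: "'h \<Rightarrow> real" and K :: "nat \<Rightarrow> real" and K' :: "nat \<Rightarrow> real"
  assumes iso: "group_iso_on r H H'"
  and nrm: "\<forall>z\<in>H. nH' (r z) = nH z"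
  and nonneg: "\<forall>z\<in>H. nH z \<ge> 0"
  and sub: "\<forall>a\<in>H. \<forall>b\<in>H. nH (a+b) \<le> nH a + nH b"
  and sub': "\<forall>a\<in>H'. \<forall>b\<in>H'. nH' (a+b) \<le> nH' a + nH' b"
  and idx: "\<forall>i\<ge>1. chain_index H gen i = chain_index H' gen' i"
  and Kpos: "\<forall>n\<ge>1. K n > 0" and Klim: "filterlim K at_top sequentially"
begin

abbreviation F where "F \<equiv> transp r H gen gen'"

lemma ck: "i \<ge> 1 \<Longrightarrow> chain_k H' gen' i = chain_k H gen i" using idx by (simp add: chain_k_def)

lemma r_in: "z \<in> H \<Longrightarrow> r z \<in> H'" using iso unfolding group_iso_on_def by (meson bij_betwE)
lemma r_add: "a \<in> H \<Longrightarrow> b \<in> H \<Longrightarrow> r (a + b) = r a + r b" using iso unfolding group_iso_on_def by blast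
lemma r_diff: "a \<in> H \<Longrightarrow> b \<in> H \<Longrightarrow> r (a - b) = r a - r b"
proof -
  assume ab: "a \<in> H" "b \<in> H"
  then have "a - b \<in> H" using sg_diff[OF A.sgH] by blast
  then have "r ((a - b) + b) = r (a - b) + r b" using r_add ab by blast
  then show ?thesis by (simp add: algebra_simps)
qed

lemma F_rep: "rep_ok H' gen' (F x) (r (hpart H gen x)) (rpart H gen x)"
  unfolding rep_ok_def transp_def using A.rpart_props[of x] A.hpart_in[of x] r_in ck by auto

lemma F_parts: "hpart H' gen' (F x) = r (hpart H gen x)" "rpart H' gen' (F x) = rpart H gen x"
  using F_rep[of x] unfolding B.rep_iff by auto

lemma F_coarse: "coarse_map (distG H gen nH K) (distG H' gen' nH' K') F"
  unfolding coarse_map_def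
proof (intro allI)
  fix \<delta> :: real
  have "eventually (\<lambda>n. \<delta> + 1 \<le> K n) sequentially" using Klim unfolding filterlim_at_top by blast
  then obtain N where N: "\<forall>n\<ge>N. \<delta> + 1 \<le> K n" unfolding eventually_sequentially by blast
  have Nb: "\<forall>n\<ge>1. K n \<le> \<delta> \<longrightarrow> n \<le> N"
  proof (intro allI impI)
    fix n assume "1 \<le> n" "K n \<le> \<delta>"
    show "n \<le> N"
    proof (rule ccontr)
      assume "\<not> n \<le> N" then have "\<delta> + 1 \<le> K n" using N by auto
      then show False using \<open>K n \<le> \<delta>\<close> by linarith
    qed
  qed
  define S where "S = {((\<Sum>i\<in>{1..N}. zmul (d i) (gen i)), (\<Sum>i\<in>{1..N}. zmul (d i) (gen' i))) | d.
     \<forall>i\<in>{1..N}. \<bar>d i\<bar> \<le> 2 * chain_k H gen i}"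
  have finS: "finite S" unfolding S_def by (rule finite_pairs)
  define B1 where "B1 = (\<Sum>p\<in>S. \<bar>nH (- hpart H gen (fst p))\<bar> + \<bar>nH' (hpart H' gen' (snd p))\<bar>)"
  define B2 where "B2 = (\<Sum>n\<le>N. \<bar>K' n\<bar>)"
  show "\<exists>\<epsilon>. \<forall>x y. distG H gen nH K x y \<le> \<delta> \<longrightarrow> distG H' gen' nH' K' (F x) (F y) \<le> \<epsilon>"
  proof (intro exI[of _ "\<delta> + B1 + B2"] allI impI)
    fix x y assume dxy: "distG H gen nH K x y \<le> \<delta>"
    define z where "z = y - x"
    have nz: "nH (hpart H gen z) + qnorm H gen K (z - hpart H gen z) \<le> \<delta>"
      using dxy by (simp add: distG_def z_def A.normG_eq)
    have q0: "qnorm H gen K (z - hpart H gen z) \<ge> 0" by (rule A.qnorm_nonneg[OF Kpos])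
    have n0: "nH (hpart H gen z) \<ge> 0" using nonneg A.hpart_in by blast
    have hz: "nH (hpart H gen z) \<le> \<delta>" using nz q0 by linarith
    have "qnorm H gen K (z - hpart H gen z) \<le> \<delta>" using nz n0 by linarith
    then have "z - hpart H gen z \<in> A.G N" using A.qnorm_small[OF Nb] by blast
    moreover have "hpart H gen z \<in> A.G N" using A.hpart_in A.H_G by blast
    ultimately have zG: "z \<in> A.G N" using sg_add[OF A.G_sg] by fastforce
    define hx where "hx = hpart H gen x"
    define hy where "hy = hpart H gen y"
    define rx where "rx = rpart H gen x"
    define ry where "ry = rpart H gen y"
    obtain P1 where P1: "\<forall>i. rx i \<noteq> 0 \<longrightarrow> i \<in> {1..P1}" using supp_bound A.rpart_props unfolding rx_def by blast
    obtain P2 where P2: "\<forall>i. ry i \<noteq> 0 \<longrightarrow> i \<in> {1..P2}" using supp_bound A.rpart_props unfolding ry_def by blast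
    define P where "P = max (max P1 P2) N"
    have NP: "N \<le> P" by (simp add: P_def)
    have sx: "\<forall>i. rx i \<noteq> 0 \<longrightarrow> i \<in> {1..P}" using P1 by (auto simp: P_def)
    have sy: "\<forall>i. ry i \<noteq> 0 \<longrightarrow> i \<in> {1..P}" using P2 by (auto simp: P_def)
    have x_eq: "x = hx + (\<Sum>i\<in>{1..P}. zmul (rx i) (gen i))"
      using A.decomp[of x] sum_supp[OF sx, of gen] unfolding hx_def rx_def by metis
    have y_eq: "y = hy + (\<Sum>i\<in>{1..P}. zmul (ry i) (gen i))"
      using A.decomp[of y] sum_supp[OF sy, of gen] unfolding hy_def ry_def by metis
    have Fx_eq: "F x = r hx + (\<Sum>i\<in>{1..P}. zmul (rx i) (gen' i))"
      using sum_supp[OF sx] unfolding hx_def rx_def transp_def by simp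
    have Fy_eq: "F y = r hy + (\<Sum>i\<in>{1..P}. zmul (ry i) (gen' i))"
      using sum_supp[OF sy] unfolding hy_def ry_def transp_def by simp
    define d where "d = (\<lambda>i. ry i - rx i)"
    have sumd: "\<And>u. (\<Sum>i\<in>{1..P}. zmul (ry i) (u i)) - (\<Sum>i\<in>{1..P}. zmul (rx i) (u i))
        = (\<Sum>i\<in>{1..P}. zmul (d i) (u i))"
      unfolding d_def by (simp add: zmul_diff sum_subtractf)
    have hxH: "hx \<in> H" "hy \<in> H" unfolding hx_def hy_def using A.hpart_in by auto
    have hdH: "hy - hx \<in> H" using hxH sg_diff[OF A.sgH] by blast
    have "z = (hy + (\<Sum>i\<in>{1..P}. zmul (ry i) (gen i))) - (hx + (\<Sum>i\<in>{1..P}. zmul (rx i) (gen i)))"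
      unfolding z_def using x_eq y_eq by simp
    also have "\<dots> = (hy - hx) + ((\<Sum>i\<in>{1..P}. zmul (ry i) (gen i)) - (\<Sum>i\<in>{1..P}. zmul (rx i) (gen i)))"
      by (simp add: algebra_simps)
    finally have z_eq: "z = (hy - hx) + (\<Sum>i\<in>{1..P}. zmul (d i) (gen i))" using sumd by simp
    have "F y - F x = (r hy + (\<Sum>i\<in>{1..P}. zmul (ry i) (gen' i))) - (r hx + (\<Sum>i\<in>{1..P}. zmul (rx i) (gen' i)))"
      using Fx_eq Fy_eq by simp
    also have "\<dots> = (r hy - r hx) + ((\<Sum>i\<in>{1..P}. zmul (ry i) (gen' i)) - (\<Sum>i\<in>{1..P}. zmul (rx i) (gen' i)))"
      by (simp add: algebra_simps)
    finally have w_eq: "F y - F x = r (hy - hx) + (\<Sum>i\<in>{1..P}. zmul (d i) (gen' i))"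
      using sumd r_diff[OF hxH(2) hxH(1)] by simp
    have bd: "\<forall>i\<in>{1..P}. \<bar>d i\<bar> \<le> 2 * chain_k H gen i"
    proof
      fix i assume "i \<in> {1..P}"
      then have "\<bar>rx i\<bar> \<le> chain_k H gen i" "\<bar>ry i\<bar> \<le> chain_k H gen i"
        using A.rpart_props(3) unfolding rx_def ry_def by auto
      then show "\<bar>d i\<bar> \<le> 2 * chain_k H gen i" unfolding d_def by linarith
    qed
    have d0: "\<And>i. N < i \<Longrightarrow> i \<le> P \<Longrightarrow> d i = 0"
      by (rule A.uniq_core[OF zG hdH bd z_eq])
    have red: "\<And>u::nat \<Rightarrow> 'c::ab_group_add. (\<Sum>i\<in>{1..P}. zmul (d i) (u i)) = (\<Sum>i\<in>{1..N}. zmul (d i) (u i))"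
      by (rule sum.mono_neutral_right) (use NP d0 in auto)
    define c where "c = (\<Sum>i\<in>{1..N}. zmul (d i) (gen i))"
    define c' where "c' = (\<Sum>i\<in>{1..N}. zmul (d i) (gen' i))"
    have cS: "(c, c') \<in> S" unfolding S_def c_def c'_def using bd NP by force
    have z2: "z = (hy - hx) + c" using z_eq red unfolding c_def by simp
    have hpz: "hpart H gen z = (hy - hx) + hpart H gen c" using z2 A.hpart_add[OF hdH] by simp
    have hdiff: "hy - hx = hpart H gen z + (- hpart H gen c)" using hpz by (simp add: algebra_simps)
    have "nH (hy - hx) \<le> nH (hpart H gen z) + nH (- hpart H gen c)"
      unfolding hdiff using sub A.hpart_in sg_neg[OF A.sgH] by blast
    then have nhd: "nH (hy - hx) \<le> \<delta> + \<bar>nH (- hpart H gen c)\<bar>" using hz by linarith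
    have w2: "F y - F x = r (hy - hx) + c'" using w_eq red unfolding c'_def by simp
    have rH: "r (hy - hx) \<in> H'" using r_in hdH by blast
    have hpw: "hpart H' gen' (F y - F x) = r (hy - hx) + hpart H' gen' c'" using w2 B.hpart_add[OF rH] by simp
    have "nH' (hpart H' gen' (F y - F x)) \<le> nH' (r (hy - hx)) + nH' (hpart H' gen' c')"
      unfolding hpw using sub' rH B.hpart_in by blast
    then have nhw: "nH' (hpart H' gen' (F y - F x)) \<le> \<delta> + \<bar>nH (- hpart H gen c)\<bar> + \<bar>nH' (hpart H' gen' c')\<bar>"
      using nrm hdH nhd by force
    have "c' \<in> B.G N" unfolding c'_def by (rule B.sum_gen_G)
    moreover have "r (hy - hx) \<in> B.G N" using rH B.H_G by blast
    ultimately have wG: "F y - F x \<in> B.G N" unfolding w2 using sg_add[OF B.G_sg] by blast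
    moreover have "hpart H' gen' (F y - F x) \<in> B.G N" using B.hpart_in B.H_G by blast
    ultimately have "F y - F x - hpart H' gen' (F y - F x) \<in> B.G N" using sg_diff[OF B.G_sg] by blast
    then have qw: "qnorm H' gen' K' (F y - F x - hpart H' gen' (F y - F x)) \<le> B2"
      unfolding B2_def by (rule B.qnorm_bound)
    have "\<bar>nH (- hpart H gen c)\<bar> + \<bar>nH' (hpart H' gen' c')\<bar> \<le> B1"
      unfolding B1_def using member_le_sum[OF cS, of "\<lambda>p. \<bar>nH (- hpart H gen (fst p))\<bar> + \<bar>nH' (hpart H' gen' (snd p))\<bar>"] finS
      by simp
    then show "distG H' gen' nH' K' (F x) (F y) \<le> \<delta> + B1 + B2"
      unfolding distG_def B.normG_eq using nhw qw by linarith
  qed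
qed

end


theorem mainTheorem15:
  fixes H :: "'g::{ab_group_add, countable} set" and H' :: "'h::{ab_group_add, countable} set"
    and r :: "'g \<Rightarrow> 'h"
    and nH :: "'g \<Rightarrow> real" and nH' :: "'h \<Rightarrow> real"
    and gen :: "nat \<Rightarrow> 'g" and gen' :: "nat \<Rightarrow> 'h"
    and K K' :: "nat \<Rightarrow> real"
  assumes "is_subgroup H" and "is_subgroup H'"
    and "quotient_odd_orders H" and "quotient_odd_orders H'"
    and "group_iso_on r H H'"
    and "proper_norm_on H nH"
    and "\<forall>x\<in>H'. nH' x = nH (inv_into H r x)"
    and "one_step_chain H gen" and "one_step_chain H' gen'"
    and "\<forall>i\<ge>1. chain_index H gen i = chain_index H' gen' i"
    and "admissible H gen nH K" and "admissible H' gen' nH' K'"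
  shows "\<exists>f. bij f \<and> coarse_equivalence (distG H gen nH K) (distG H' gen' nH' K') f"
proof -
  have cA: "chs H gen" by (rule chs.intro) (use assms in auto)
  have cB: "chs H' gen'" by (rule chs.intro) (use assms in auto)
  interpret A: chs H gen by (rule cA)
  interpret B: chs H' gen' by (rule cB)
  let ?s = "inv_into H r"
  have bij: "bij_betw r H H'" and radd: "\<forall>x\<in>H. \<forall>y\<in>H. r (x + y) = r x + r y"
    using assms(5) unfolding group_iso_on_def by auto
  have inj: "inj_on r H" and img: "r ` H = H'" using bij unfolding bij_betw_def by auto
  have s_in: "\<And>z. z \<in> H' \<Longrightarrow> ?s z \<in> H" using img by (metis inv_into_into)
  have rs: "\<And>z. z \<in> H' \<Longrightarrow> r (?s z) = z" using img by (metis f_inv_into_f)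
  have sr: "\<And>z. z \<in> H \<Longrightarrow> ?s (r z) = z" using inj by (metis inv_into_f_f)
  have r_in: "\<And>z. z \<in> H \<Longrightarrow> r z \<in> H'" using img by blast
  have sadd: "\<forall>x\<in>H'. \<forall>y\<in>H'. ?s (x + y) = ?s x + ?s y"
  proof (intro ballI)
    fix a b assume ab: "a \<in> H'" "b \<in> H'"
    have "r (?s a + ?s b) = a + b" using radd s_in rs ab by simp
    moreover have "?s a + ?s b \<in> H" using s_in ab sg_add[OF assms(1)] by blast
    ultimately show "?s (a + b) = ?s a + ?s b" using sr by metis
  qed
  have iso': "group_iso_on ?s H' H" unfolding group_iso_on_def
    using bij_betw_inv_into[OF bij] sadd by blast
  have pn: "\<forall>g\<in>H. nH g = 0 \<longleftrightarrow> g = 0" "\<forall>g\<in>H. nH (- g) = nH g" "\<forall>g\<in>H. \<forall>h\<in>H. nH (g + h) \<le> nH g + nH h"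
    using assms(6) unfolding proper_norm_on_def by auto
  have nonneg: "\<forall>z\<in>H. nH z \<ge> 0"
  proof
    fix z assume z: "z \<in> H"
    have "nH (z + - z) \<le> nH z + nH (- z)" using pn(3) z sg_neg[OF assms(1)] by blast
    moreover have "nH (z + - z) = 0" using pn(1) sg_0[OF assms(1)] by simp
    ultimately show "nH z \<ge> 0" using pn(2) z by simp
  qed
  have nrm: "\<forall>z\<in>H. nH' (r z) = nH z" using assms(7) r_in sr by simp
  have nrm': "\<forall>z\<in>H'. nH (?s z) = nH' z" using assms(7) by simp
  have nonneg': "\<forall>z\<in>H'. nH' z \<ge> 0" using assms(7) nonneg s_in by simp
  have sub': "\<forall>a\<in>H'. \<forall>b\<in>H'. nH' (a+b) \<le> nH' a + nH' b"
  proof (intro ballI)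
    fix a b assume ab: "a \<in> H'" "b \<in> H'"
    then have "a + b \<in> H'" using sg_add[OF assms(2)] by blast
    then have "nH' (a + b) = nH (?s a + ?s b)" using assms(7) sadd ab by simp
    also have "\<dots> \<le> nH (?s a) + nH (?s b)" using pn(3) s_in ab by blast
    finally show "nH' (a+b) \<le> nH' a + nH' b" using assms(7) ab by simp
  qed
  have KA: "\<forall>n\<ge>1. K n > 0" "filterlim K at_top sequentially"
    using assms(11) unfolding admissible_def by auto
  have KB: "\<forall>n\<ge>1. K' n > 0" "filterlim K' at_top sequentially"
    using assms(12) unfolding admissible_def by auto
  have p1: "pair H gen H' gen' r nH nH' K"
    by (intro pair.intro cA cB pair_axioms.intro assms(5) nrm nonneg pn(3) sub' assms(10) KA)
  have p2: "pair H' gen' H gen ?s nH' nH K'"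
    by (intro pair.intro cA cB pair_axioms.intro iso' nrm' nonneg' pn(3) sub' KB)
       (use assms(10) in simp)
  interpret P1: pair H gen H' gen' r nH nH' K K' by (rule p1)
  interpret P2: pair H' gen' H gen ?s nH' nH K' K by (rule p2)
  let ?f = "transp r H gen gen'" and ?g = "transp ?s H' gen' gen"
  have gf: "?g (?f x) = x" for x
  proof -
    have "?g (?f x) = ?s (r (hpart H gen x)) + (\<Sum>i\<in>{i. rpart H gen x i \<noteq> 0}. zmul (rpart H gen x i) (gen i))"
      unfolding transp_def[of ?s] P1.F_parts ..
    also have "\<dots> = x" using sr[OF A.hpart_in] A.decomp[of x] by simp
    finally show ?thesis .
  qed
  have fg: "?f (?g y) = y" for y
  proof -
    have "?f (?g y) = r (?s (hpart H' gen' y)) + (\<Sum>i\<in>{i. rpart H' gen' y i \<noteq> 0}. zmul (rpart H' gen' y i) (gen' i))"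
      unfolding transp_def[of r] P2.F_parts ..
    also have "\<dots> = y" using rs[OF B.hpart_in] B.decomp[of y] by simp
    finally show ?thesis .
  qed
  have "bij ?f" by (rule o_bij[of ?g]) (use gf fg in auto)
  moreover have "coarse_equivalence (distG H gen nH K) (distG H' gen' nH' K') ?f"
    unfolding coarse_equivalence_def
  proof (intro conjI exI[of _ ?g])
    show "coarse_map (distG H gen nH K) (distG H' gen' nH' K') ?f" by (rule P1.F_coarse)
    show "coarse_map (distG H' gen' nH' K') (distG H gen nH K) ?g" by (rule P2.F_coarse)
    show "\<exists>C. \<forall>x. distG H gen nH K (?g (?f x)) x \<le> C"
      by (rule exI[of _ "normG H gen nH K 0"]) (simp add: gf distG_def)
    show "\<exists>C. \<forall>y. distG H' gen' nH' K' (?f (?g y)) y \<le> C"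
      by (rule exI[of _ "normG H' gen' nH' K' 0"]) (simp add: fg distG_def)
  qed
  ultimately show ?thesis by blast
qed


end
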